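(* Let $d\geq1$ be an integer. Let $a_{i,j}$ ($0\leq i,j\leq d$, $i\neq j$) be complex numbers satisfying $a_{i,j}=a_{j,i}$ for all $i\neq j$, \[ g(a_{i,j},a_{j,k},a_{i,k})=0\quad\text{for all pairwise distinct } i,j,k, \] \[ h(a_{i,j},a_{i,k},a_{i,\ell},a_{j,k},a_{j,\ell},a_{k,\ell})=0\quad\text{for all pairwise distinct } i,j,k,\ell. \] Assume that $a_{i_0,i_1}\neq\pm2$ for some $i_0,i_1$ with $0\leq i_0<i_1\leq d$, and let $w_{i_0},w_{i_1}$ be nonzero complex numbers with $\frac{w_{i_0}}{w_{i_1}}+\frac{w_{i_1}}{w_{i_0}}=a_{i_0,i_1}$. Then for complex numbers $w_i$ ($0\leq i\leq d$, $i\neq i_0,i_1$) the following are equivalent: (i) for all $i,j$ with $0\leq i,j\leq d$ and $i\neq j$, $\frac{w_j}{w_i}+\frac{w_i}{w_j}=a_{i,j}$; (ii) for all $i$ with $0\leq i\leq d$, $i\neq i_0,i_1$, \[ w_i=\frac{w_{i_1}^2-w_{i_0}^2}{a_{i_1,i}w_{i_1}-a_{i_0,i}w_{i_0}}. \] Moreover, if one of the two equivalent conditions holds, all $a_{i,j}$ ($0\leq i<j\leq d$) are real, and $-2<a_{i_0,i_1}<2$, then $|w_i|=|w_j|$ for all $0\leq i<j\leq d$.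
   Context: Here $g(X,Y,Z)=X^2+Y^2+Z^2-XYZ-4$ and \[ h(X_{0,1},X_{0,2},X_{0,3},X_{1,2},X_{1,3},X_{2,3})=\det\begin{bmatrix}2&X_{0,1}&X_{0,2}\\ X_{0,1}&2&X_{1,2}\\ X_{0,3}&X_{1,3}&X_{2,3}\end{bmatrix}. \] *)

theory Defs
  imports "HOL-Analysis.Analysis"
begin

definition g :: "complex \<Rightarrow> complex \<Rightarrow> complex \<Rightarrow> complex" where
  "g X Y Z = X^2 + Y^2 + Z^2 - X*Y*Z - 4"

definition h :: "complex \<Rightarrow> complex \<Rightarrow> complex \<Rightarrow> complex \<Rightarrow> complex \<Rightarrow> complex \<Rightarrow> complex" where
  "h X01 X02 X03 X12 X13 X23 =
     det (vector [vector [2, X01, X02], vector [X01, 2, X12], vector [X03, X13, X23]]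
          :: complex ^ 3 ^ 3)"

end

theory Submission
  imports Defs
begin

lemma h_expand: "h X01 X02 X03 X12 X13 X23 =
  2*(2*X23 - X12*X13) - X01*(X01*X23 - X12*X03) + X02*(X01*X13 - 2*X03)"
  unfolding h_def by (simp add: det_3 algebra_simps)

lemma pair_iff: fixes p q a :: complex assumes "p \<noteq> 0" "q \<noteq> 0"
  shows "p/q + q/p = a \<longleftrightarrow> p^2 + q^2 = a*p*q"
  using assms by (auto simp: field_simps power2_eq_square)

lemma keyA:
  fixes w0 w1 a01 b c u :: complex
  assumes w0: "w0 \<noteq> 0" and w1: "w1 \<noteq> 0"
    and a01: "w0^2 + w1^2 = a01*w0*w1"
    and ne: "a01 \<noteq> 2" "a01 \<noteq> -2"
    and gg: "g a01 b c = 0"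
  shows "b*w1 - c*w0 \<noteq> 0" and
    "u = (w1^2 - w0^2)/(b*w1 - c*w0) \<Longrightarrow> u \<noteq> 0 \<and> u^2 + w1^2 = b*u*w1 \<and> u^2 + w0^2 = c*u*w0"
proof -
  have N: "w1^2 - w0^2 \<noteq> 0"
  proof
    assume "w1^2 - w0^2 = 0"
    then have "(w1 - w0)*(w1+w0) = 0" by (simp add: algebra_simps power2_eq_square)
    then have "w1 - w0 = 0 \<or> w1 + w0 = 0" by simp
    then have "w0 = w1 \<or> w0 = -w1" by (auto simp: algebra_simps add_eq_0_iff)
    then show False
    proof
      assume "w0 = w1"
      then have "(2 - a01)*(w1*w1) = 0" using a01 by (simp add: algebra_simps power2_eq_square)
      then show False using ne w1 by simp
    next
      assume "w0 = -w1"
      then have "(2 + a01)*(w1*w1) = 0" using a01 by (simp add: algebra_simps power2_eq_square)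
      then show False using ne w1 by (simp add: add_eq_0_iff)
    qed
  qed
  have gE: "a01^2 + b^2 + c^2 - a01*b*c - 4 = 0" using gg by (simp add: g_def)
  show D: "b*w1 - c*w0 \<noteq> 0"
  proof
    assume D0: "b*w1 - c*w0 = 0"
    have "w0^2*w1^2*(a01^2 + b^2 + c^2 - a01*b*c - 4) = (w1^2 - w0^2)^2"
      using D0 a01 by algebra
    then show False using gE N by simp
  qed
  assume u: "u = (w1^2 - w0^2)/(b*w1 - c*w0)"
  have vD: "u*(b*w1 - c*w0) = w1^2 - w0^2" using u D by simp
  show "u \<noteq> 0 \<and> u^2 + w1^2 = b*u*w1 \<and> u^2 + w0^2 = c*u*w0"
  proof (intro conjI)
    show "u \<noteq> 0" using vD N by auto
    have "(b*w1 - c*w0)^2 * (u^2 + w1^2 - b*u*w1) = 0"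
      using vD a01 gE by algebra
    then show "u^2 + w1^2 = b*u*w1" using D by simp
    have "(b*w1 - c*w0)^2 * (u^2 + w0^2 - c*u*w0) = 0"
      using vD a01 gE by algebra
    then show "u^2 + w0^2 = c*u*w0" using D by simp
  qed
qed

lemma keyB:
  fixes w0 w1 wi wj aij :: complex
  assumes nz: "w0 \<noteq> 0" "w1 \<noteq> 0" "wi \<noteq> 0" "wj \<noteq> 0"
    and ne: "w0/w1 + w1/w0 \<noteq> 2" "w0/w1 + w1/w0 \<noteq> -2"
    and hh: "h (w0/w1 + w1/w0) (wi/w0 + w0/wi) (wj/w0 + w0/wj) (wi/w1 + w1/wi) (wj/w1 + w1/wj) aij = 0"
  shows "aij = wj/wi + wi/wj"
proof -
  define A where "A = w0/w1 + w1/w0"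
  define B where "B = wj/wi + wi/wj"
  have "h (w0/w1 + w1/w0) (wi/w0 + w0/wi) (wj/w0 + w0/wj) (wi/w1 + w1/wi) (wj/w1 + w1/wj) aij
     = (4 - A^2) * (aij - B)"
    unfolding h_expand A_def B_def using nz by (simp add: field_simps) (simp add: algebra_simps power2_eq_square power3_eq_cube)
  then have "(4 - A^2)*(aij - B) = 0" using hh by simp
  moreover have "4 - A^2 \<noteq> 0"
  proof
    assume "4 - A^2 = 0"
    then have "(2 - A)*(2+A) = 0" by (simp add: algebra_simps power2_eq_square)
    then show False using ne A_def by (auto simp: add_eq_0_iff)
  qed
  ultimately show ?thesis using B_def by simp
qed

lemma Cr: fixes x :: complex assumes "x \<in> \<real>" "x \<noteq> 0"
  shows "Re (x + 1/x) \<ge> 2 \<or> Re (x + 1/x) \<le> -2"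
proof -
  obtain r where r: "x = of_real r" using assms(1) by (auto elim: Reals_cases)
  have r0: "r \<noteq> 0" using r assms(2) by simp
  have e: "Re (x + 1/x) = r + 1/r" using r by simp
  have "(r - 1)^2 \<ge> 0" "(r+1)^2 \<ge> 0" by simp_all
  then have "r + 1/r - 2 = (r-1)^2/r" "r + 1/r + 2 = (r+1)^2/r" using r0
    by (simp_all add: field_simps power2_eq_square)
  moreover have "r > 0 \<or> r < 0" using r0 by auto
  ultimately have "r + 1/r \<ge> 2 \<or> r + 1/r \<le> -2"
  proof (elim conjE disjE)
    assume a: "r + 1/r - 2 = (r-1)^2/r" "r + 1/r + 2 = (r+1)^2/r" "r > 0"
    have "(r-1)^2/r \<ge> 0" using a(3) by simp
    then show ?thesis using a(1) by simp
  next
    assume a: "r + 1/r - 2 = (r-1)^2/r" "r + 1/r + 2 = (r+1)^2/r" "r < 0"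
    have "(r+1)^2/r \<le> 0" using a(3) by (simp add: divide_nonneg_neg)
    then show ?thesis using a(2) by simp
  qed
  then show ?thesis using e by simp
qed

lemma Cc: fixes t :: complex assumes "t \<noteq> 0" "t + 1/t \<in> \<real>"
  shows "t \<in> \<real> \<or> cmod t = 1"
proof -
  have im: "Im (t + 1/t) = 0" using assms(2) by (simp add: complex_is_Real_iff)
  define n where "n = (Re t)^2 + (Im t)^2"
  have n0: "n \<noteq> 0" using assms(1) n_def by (simp add: complex_eq_iff sum_power2_eq_zero_iff)
  have "Im (1/t) = - Im t / n" unfolding n_def by (simp add: Im_divide power2_eq_square)
  then have "Im t * (1 - 1/n) = 0" using im by (simp add: algebra_simps)
  then have "Im t = 0 \<or> n = 1" using n0 by (auto simp: field_simps)
  moreover have "cmod t = sqrt n" unfolding n_def cmod_def by simp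
  ultimately show ?thesis by (auto simp: complex_is_Real_iff)
qed

theorem lemma2p4:
  fixes d :: nat and a :: "nat \<Rightarrow> nat \<Rightarrow> complex" and w :: "nat \<Rightarrow> complex"
    and i0 i1 :: nat
  assumes "d \<ge> 1"
    and sym: "\<And>i j. i \<le> d \<Longrightarrow> j \<le> d \<Longrightarrow> i \<noteq> j \<Longrightarrow> a i j = a j i"
    and gz: "\<And>i j k. i \<le> d \<Longrightarrow> j \<le> d \<Longrightarrow> k \<le> d \<Longrightarrow> i \<noteq> j \<Longrightarrow> i \<noteq> k \<Longrightarrow> j \<noteq> k
              \<Longrightarrow> g (a i j) (a j k) (a i k) = 0"
    and hz: "\<And>i j k l. i \<le> d \<Longrightarrow> j \<le> d \<Longrightarrow> k \<le> d \<Longrightarrow> l \<le> d \<Longrightarrow>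
              i \<noteq> j \<Longrightarrow> i \<noteq> k \<Longrightarrow> i \<noteq> l \<Longrightarrow> j \<noteq> k \<Longrightarrow> j \<noteq> l \<Longrightarrow> k \<noteq> l
              \<Longrightarrow> h (a i j) (a i k) (a i l) (a j k) (a j l) (a k l) = 0"
    and i01: "i0 < i1" "i1 \<le> d"
    and ne2: "a i0 i1 \<noteq> 2" "a i0 i1 \<noteq> -2"
    and w0: "w i0 \<noteq> 0" and w1: "w i1 \<noteq> 0"
    and w01: "w i0 / w i1 + w i1 / w i0 = a i0 i1"
  shows "((\<forall>i\<le>d. \<forall>j\<le>d. i \<noteq> j \<longrightarrow> w j / w i + w i / w j = a i j) \<longleftrightarrow>
          (\<forall>i\<le>d. i \<noteq> i0 \<longrightarrow> i \<noteq> i1 \<longrightarrow>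
              w i = (w i1 ^ 2 - w i0 ^ 2) / (a i1 i * w i1 - a i0 i * w i0)))
       \<and> (((\<forall>i\<le>d. \<forall>j\<le>d. i \<noteq> j \<longrightarrow> w j / w i + w i / w j = a i j)
            \<and> (\<forall>i j. i < j \<longrightarrow> j \<le> d \<longrightarrow> a i j \<in> \<real>)
            \<and> -2 < Re (a i0 i1) \<and> Re (a i0 i1) < 2)
          \<longrightarrow> (\<forall>i j. i < j \<longrightarrow> j \<le> d \<longrightarrow> cmod (w i) = cmod (w j)))"
proof -
  let ?P = "\<lambda>i j. w j / w i + w i / w j = a i j"
  let ?F = "\<forall>i\<le>d. i \<noteq> i0 \<longrightarrow> i \<noteq> i1 \<longrightarrow>
              w i = (w i1 ^ 2 - w i0 ^ 2) / (a i1 i * w i1 - a i0 i * w i0)"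
  let ?I = "\<forall>i\<le>d. \<forall>j\<le>d. i \<noteq> j \<longrightarrow> ?P i j"
  have i0d: "i0 \<le> d" and i01ne: "i0 \<noteq> i1" using i01 by auto
  have a01r: "w i0 ^2 + w i1 ^2 = a i0 i1 * w i0 * w i1"
    using w01 pair_iff[OF w0 w1] by simp
  have ne2': "a i0 i1 \<noteq> 2" "a i0 i1 \<noteq> -2" using ne2 by auto
  have gk: "g (a i0 i1) (a i1 k) (a i0 k) = 0" if "k \<le> d" "k \<noteq> i0" "k \<noteq> i1" for k
    using gz[OF i0d i01(2) that(1) i01ne] that by auto
  have Pcomm: "?P i j \<longleftrightarrow> ?P j i" if "i \<le> d" "j \<le> d" "i \<noteq> j" for i j
    using sym[OF that] by (auto simp: add.commute)
  have P01: "?P i1 i0" using w01 sym[OF i0d i01(2) i01ne] by (simp add: add.commute)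
  have P10: "?P i0 i1" using P01 Pcomm[OF i01(2) i0d] i01ne by auto
  have fwd: "?I \<Longrightarrow> ?F"
  proof (intro allI impI)
    fix k assume I: ?I and k: "k \<le> d" "k \<noteq> i0" "k \<noteq> i1"
    have p1: "?P i1 k" and p0: "?P i0 k" using I k i0d i01 by auto
    show "w k = (w i1 ^ 2 - w i0 ^ 2) / (a i1 k * w i1 - a i0 k * w i0)"
    proof (cases "w k = 0")
      case True
      then show ?thesis using p1 p0 by simp
    next
      case False
      have e1: "w k ^2 + w i1 ^2 = a i1 k * w k * w i1" using p1 pair_iff[OF False w1] by simp
      have e0: "w k ^2 + w i0 ^2 = a i0 k * w k * w i0" using p0 pair_iff[OF False w0] by simp
      have D: "a i1 k * w i1 - a i0 k * w i0 \<noteq> 0"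
        using keyA(1)[OF w0 w1 a01r ne2' gk[OF k]] .
      have "w k * (a i1 k * w i1 - a i0 k * w i0) = w i1 ^ 2 - w i0 ^ 2"
        using e1 e0 by algebra
      then show ?thesis using D by (simp add: field_simps)
    qed
  qed
  have bwd: "?F \<Longrightarrow> (\<forall>k\<le>d. w k \<noteq> 0 \<and> (k \<noteq> i1 \<longrightarrow> ?P i1 k) \<and> (k \<noteq> i0 \<longrightarrow> ?P i0 k))"
  proof (intro allI impI)
    fix k assume F: ?F and k: "k \<le> d"
    show "w k \<noteq> 0 \<and> (k \<noteq> i1 \<longrightarrow> ?P i1 k) \<and> (k \<noteq> i0 \<longrightarrow> ?P i0 k)"
    proof (cases "k = i0 \<or> k = i1")
      case True
      then show ?thesis using w0 w1 P01 P10 by auto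
    next
      case False
      then have k': "k \<noteq> i0" "k \<noteq> i1" by auto
      have wk: "w k = (w i1 ^ 2 - w i0 ^ 2) / (a i1 k * w i1 - a i0 k * w i0)"
        using F k k' by auto
      have R: "w k \<noteq> 0 \<and> w k ^2 + w i1 ^2 = a i1 k * w k * w i1 \<and> w k ^2 + w i0 ^2 = a i0 k * w k * w i0"
        using keyA(2)[OF w0 w1 a01r ne2' gk[OF k k'] wk] .
      then show ?thesis using pair_iff[OF _ w1, of "w k"] pair_iff[OF _ w0, of "w k"] k' by auto
    qed
  qed
  have bwdI: "?F \<Longrightarrow> ?I"
  proof (intro allI impI)
    fix i j assume F: ?F and ij: "i \<le> d" "j \<le> d" "i \<noteq> j"
    note B = bwd[OF F]
    show "?P i j"
    proof (cases "i = i0 \<or> i = i1")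
      case True
      then show ?thesis using B ij by auto
    next
      case Fi: False
      show ?thesis
      proof (cases "j = i0 \<or> j = i1")
        case True
        then have "?P j i" using B ij Fi by auto
        then show ?thesis using Pcomm[OF ij] by simp
      next
        case Fj: False
        have hh: "h (a i0 i1) (a i0 i) (a i0 j) (a i1 i) (a i1 j) (a i j) = 0"
          using hz[OF i0d i01(2) ij(1) ij(2)] i01ne Fi Fj ij(3) by auto
        have A01: "a i0 i1 = w i0 / w i1 + w i1 / w i0" using w01 by simp
        have "?P i0 i" "?P i0 j" "?P i1 i" "?P i1 j" using B ij Fi Fj by auto
        then have hh': "h (w i0 / w i1 + w i1 / w i0) (w i / w i0 + w i0 / w i) (w j / w i0 + w i0 / w j)
            (w i / w i1 + w i1 / w i) (w j / w i1 + w i1 / w j) (a i j) = 0"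
          using hh A01 by simp
        have "a i j = w j / w i + w i / w j"
          using keyB[OF w0 w1 _ _ _ _ hh'] B ij ne2 A01 by auto
        then show ?thesis by simp
      qed
    qed
  qed
  have part1: "?I \<longleftrightarrow> ?F" using fwd bwdI by blast
  have part2: "(\<forall>i j. i < j \<longrightarrow> j \<le> d \<longrightarrow> cmod (w i) = cmod (w j))"
    if I: ?I and re: "\<forall>i j. i < j \<longrightarrow> j \<le> d \<longrightarrow> a i j \<in> \<real>"
      and lo: "-2 < Re (a i0 i1)" and hi: "Re (a i0 i1) < 2"
  proof -
    have F: ?F using fwd I by blast
    note B = bwd[OF F]
    have reall: "a i j \<in> \<real>" if "i \<le> d" "j \<le> d" "i \<noteq> j" for i j
    proof (cases "i < j")
      case True then show ?thesis using re that by auto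
    next
      case False then have "j < i" using that by auto
      then show ?thesis using re that sym[OF that] by auto
    qed
    define x where "x = w i0 / w i1"
    have x0: "x \<noteq> 0" using w0 w1 x_def by simp
    have xa: "x + 1/x = a i0 i1" using w01 x_def by simp
    have xnr: "x \<notin> \<real>"
    proof
      assume "x \<in> \<real>"
      then show False using Cr[OF _ x0] xa lo hi by auto
    qed
    have x1: "cmod x = 1" using Cc[OF x0] xa reall[OF i0d i01(2) i01ne] xnr by auto
    have all: "cmod (w k) = cmod (w i1)" if k: "k \<le> d" for k
    proof (cases "k = i0 \<or> k = i1")
      case True
      then show ?thesis using x1 x_def w1 by (auto simp: norm_divide)
    next
      case False
      define t where "t = w k / w i1"
      define s where "s = w k / w i0"
      have wk: "w k \<noteq> 0" using B k by auto
      have t0: "t \<noteq> 0" and s0: "s \<noteq> 0" using wk w0 w1 t_def s_def by auto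
      have ta: "t + 1/t = a i1 k" using B k False t_def by auto
      have sa: "s + 1/s = a i0 k" using B k False s_def by auto
      have tr: "t + 1/t \<in> \<real>" using ta reall[OF i01(2) k] False by auto
      have sr: "s + 1/s \<in> \<real>" using sa reall[OF i0d k] False by auto
      have xts: "x = t / s"
      proof -
        have "t / s = (w k / w i1) * (w i0 / w k)" unfolding t_def s_def by simp
        also have "\<dots> = w i0 / w i1" using wk by simp
        finally show ?thesis unfolding x_def by simp
      qed
      have ns: "cmod s = cmod t" using xts x1 t0 s0 by (simp add: norm_divide)
      show ?thesis
      proof (rule ccontr)
        assume "cmod (w k) \<noteq> cmod (w i1)"
        then have "cmod t \<noteq> 1" using t_def w1 by (simp add: norm_divide)
        then have "t \<in> \<real>" "s \<in> \<real>" using Cc[OF t0 tr] Cc[OF s0 sr] ns by auto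
        then have "x \<in> \<real>" using xts by simp
        then show False using xnr by simp
      qed
    qed
    show ?thesis using all by (metis i01(2) dual_order.trans less_imp_le)
  qed
  show ?thesis using part1 part2 by blast
qed

end
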